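(* Let $(a_n)_{n\ge1}$ be real scalars and let $T_n\in(c_0)^*$ be given by $T_nx=a_nx_n$ for $x=(x_k)_{k\ge1}\in c_0$. Then $\mathcal{R}(\{T_n:n\ge1\})=\|a\|_{\ell^2}$ (both sides possibly infinite).
   Context: $c_0$ is the space of real null sequences with the sup norm. For a family $\mathscr{T}\subseteq\mathcal{L}(X,Y)$, the $R$-bound $\mathcal{R}(\mathscr{T})$ is the least $C\in[0,\infty]$ such that $(\mathbb{E}\|\sum_{n=1}^N r_nS_nx_n\|^2)^{1/2}\le C(\mathbb{E}\|\sum_{n=1}^N r_nx_n\|^2)^{1/2}$ for all $N$, all $S_1,\dots,S_N\in\mathscr{T}$ and all $x_1,\dots,x_N\in X$, where $(r_n)$ is a Rademacher sequence. *)

theory Defs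
  imports "HOL-Analysis.Analysis" "HOL-Library.FuncSet"
begin

definition c0 :: "(nat \<Rightarrow> real) set" where
  "c0 = {x. x \<longlonglongrightarrow> 0}"

definition c0_norm :: "(nat \<Rightarrow> real) \<Rightarrow> real" where
  "c0_norm x = (SUP k. \<bar>x k\<bar>)"

text \<open>All sign patterns of a Rademacher vector (r_0,...,r_{N-1}); each has probability 2^(-N).\<close>
definition signs :: "nat \<Rightarrow> (nat \<Rightarrow> real) set" where
  "signs N = PiE {..<N} (\<lambda>_. {-1, 1})"

definition rad_c0 :: "nat \<Rightarrow> (nat \<Rightarrow> nat \<Rightarrow> real) \<Rightarrow> real" where
  "rad_c0 N x = sqrt ((\<Sum>\<epsilon>\<in>signs N. (c0_norm (\<lambda>k. \<Sum>n<N. \<epsilon> n * x n k))\<^sup>2) / 2 ^ N)"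

definition rad_real :: "nat \<Rightarrow> (nat \<Rightarrow> real) \<Rightarrow> real" where
  "rad_real N y = sqrt ((\<Sum>\<epsilon>\<in>signs N. (\<bar>\<Sum>n<N. \<epsilon> n * y n\<bar>)\<^sup>2) / 2 ^ N)"

definition R_bound :: "((nat \<Rightarrow> real) \<Rightarrow> real) set \<Rightarrow> ennreal" where
  "R_bound \<T> = Inf {C. \<forall>N S x. (\<forall>n<N. S n \<in> \<T>) \<longrightarrow> (\<forall>n<N. x n \<in> c0) \<longrightarrow>
      ennreal (rad_real N (\<lambda>n. S n (x n))) \<le> C * ennreal (rad_c0 N x)}"

definition l2_norm_ext :: "(nat \<Rightarrow> real) \<Rightarrow> ennreal" where
  "l2_norm_ext a = (SUP N. ennreal (sqrt (\<Sum>n<N. (a n)\<^sup>2)))"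

end

theory Submission imports Defs begin

lemma signs_flip: "n < N \<Longrightarrow> e \<in> signs N \<Longrightarrow> e(n := - e n) \<in> signs N"
  unfolding signs_def by (auto simp: PiE_iff extensional_def)

lemma signs_sq: "n < N \<Longrightarrow> e \<in> signs N \<Longrightarrow> e n * e n = 1"
  unfolding signs_def by (force simp: PiE_iff)

lemma card_signs: "card (signs N) = 2 ^ N" and finite_signs: "finite (signs N)"
  unfolding signs_def by (auto simp: card_PiE finite_PiE numeral_2_eq_2)

lemma cross0:
  assumes "n < N" "m < N" "n \<noteq> m"
  shows "(\<Sum>e\<in>signs N. e n * e m) = 0"
proof -
  let ?f = "\<lambda>e::nat\<Rightarrow>real. e(n := - e n)"
  have "(\<Sum>e\<in>signs N. e n * e m) = (\<Sum>e\<in>signs N. ?f e n * ?f e m)"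
    by (rule sum.reindex_bij_witness[of _ ?f ?f]) (use assms signs_flip in auto)
  also have "\<dots> = - (\<Sum>e\<in>signs N. e n * e m)"
    using assms by (simp add: sum_negf)
  finally show ?thesis by simp
qed

lemma inner_sum: "n < N \<Longrightarrow> m < N \<Longrightarrow> (\<Sum>e\<in>signs N. e n * e m) = (if n = m then 2^N else 0)"
  using cross0[of n N m] signs_sq[of n N] card_signs[of N] by auto

lemma orth: "(\<Sum>e\<in>signs N. (\<Sum>n<N. e n * y n)\<^sup>2) = 2^N * (\<Sum>n<N. (y n)\<^sup>2)"
proof -
  have "(\<Sum>e\<in>signs N. (\<Sum>n<N. e n * y n)\<^sup>2)
      = (\<Sum>e\<in>signs N. \<Sum>n<N. \<Sum>m<N. (e n * e m) * (y n * y m))"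
    by (simp add: power2_eq_square sum_product algebra_simps)
  also have "\<dots> = (\<Sum>n<N. \<Sum>m<N. (\<Sum>e\<in>signs N. e n * e m) * (y n * y m))"
    by (simp add: sum.swap[of _ "signs N"] sum_distrib_right)
  also have "\<dots> = (\<Sum>n<N. \<Sum>m<N. (if n = m then 2^N * (y n * y m) else 0))"
    by (intro sum.cong refl) (simp add: inner_sum)
  also have "\<dots> = 2^N * (\<Sum>n<N. (y n)\<^sup>2)"
    by (simp add: sum_distrib_left power2_eq_square)
  finally show ?thesis .
qed

lemma c0_ge:
  assumes "\<forall>n<N. x n \<in> c0"
  shows "(\<Sum>n<N. e n * x n k)\<^sup>2 \<le> (c0_norm (\<lambda>k. \<Sum>n<N. e n * x n k))\<^sup>2"
proof -
  define z where "z = (\<lambda>k. \<Sum>n<N. e n * x n k)"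
  have "z \<longlonglongrightarrow> 0" unfolding z_def
    by (rule tendsto_null_sum, rule tendsto_mult_right_zero) (use assms in \<open>auto simp: c0_def\<close>)
  hence "Bseq z" by (intro convergent_imp_Bseq) (auto simp: convergent_def)
  then obtain B where "\<And>k. norm (z k) \<le> B" unfolding Bseq_def by auto
  hence bdd: "bdd_above (range (\<lambda>k. \<bar>z k\<bar>))" by (intro bdd_aboveI[where M=B]) auto
  have le: "\<bar>z k\<bar> \<le> (SUP k. \<bar>z k\<bar>)" by (rule cSUP_upper[OF _ bdd]) auto
  have "\<bar>z k\<bar> \<le> \<bar>SUP k. \<bar>z k\<bar>\<bar>" using le by linarith
  hence "(z k)\<^sup>2 \<le> (SUP k. \<bar>z k\<bar>)\<^sup>2" by (simp add: abs_le_square_iff)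
  thus ?thesis by (simp add: z_def c0_norm_def)
qed

lemma col_le:
  assumes "\<forall>n<N. x n \<in> c0"
  shows "(\<Sum>n<N. (x n k)\<^sup>2) \<le> (\<Sum>e\<in>signs N. (c0_norm (\<lambda>k. \<Sum>n<N. e n * x n k))\<^sup>2) / 2^N"
proof -
  have "2^N * (\<Sum>n<N. (x n k)\<^sup>2) = (\<Sum>e\<in>signs N. (\<Sum>n<N. e n * x n k)\<^sup>2)"
    by (rule orth[symmetric])
  also have "\<dots> \<le> (\<Sum>e\<in>signs N. (c0_norm (\<lambda>k. \<Sum>n<N. e n * x n k))\<^sup>2)"
    by (intro sum_mono c0_ge assms)
  finally show ?thesis by (simp add: field_simps)
qed

lemma upper:
  assumes "\<forall>n<N. x n \<in> c0"
  shows "rad_real N (\<lambda>n. a (m n) * x n (m n)) \<le> sqrt (\<Sum>k\<in>m`{..<N}. (a k)\<^sup>2) * rad_c0 N x"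
proof -
  define Q where "Q = (\<Sum>e\<in>signs N. (c0_norm (\<lambda>k. \<Sum>n<N. e n * x n k))\<^sup>2) / 2^N"
  define F where "F = m`{..<N}"
  have rr: "rad_real N (\<lambda>n. a (m n) * x n (m n)) = sqrt (\<Sum>n<N. (a (m n) * x n (m n))\<^sup>2)"
    unfolding rad_real_def by (simp add: orth)
  have rc: "rad_c0 N x = sqrt Q" unfolding rad_c0_def Q_def by simp
  have "(\<Sum>n<N. (a (m n) * x n (m n))\<^sup>2) = (\<Sum>n<N. \<Sum>k\<in>F. if k = m n then (a k)\<^sup>2 * (x n k)\<^sup>2 else 0)"
    by (intro sum.cong refl) (auto simp: F_def power_mult_distrib)
  also have "\<dots> \<le> (\<Sum>n<N. \<Sum>k\<in>F. (a k)\<^sup>2 * (x n k)\<^sup>2)"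
    by (intro sum_mono) auto
  also have "\<dots> = (\<Sum>k\<in>F. (a k)\<^sup>2 * (\<Sum>n<N. (x n k)\<^sup>2))"
    by (simp add: sum.swap[of _ F] sum_distrib_left)
  also have "\<dots> \<le> (\<Sum>k\<in>F. (a k)\<^sup>2 * Q)"
    by (intro sum_mono mult_left_mono) (use col_le[OF assms] in \<open>auto simp: Q_def\<close>)
  also have "\<dots> = (\<Sum>k\<in>F. (a k)\<^sup>2) * Q" by (simp add: sum_distrib_right)
  finally have "sqrt (\<Sum>n<N. (a (m n) * x n (m n))\<^sup>2) \<le> sqrt ((\<Sum>k\<in>F. (a k)\<^sup>2) * Q)"
    by (rule real_sqrt_le_mono)
  thus ?thesis by (simp add: rr rc F_def real_sqrt_mult)
qed

lemma rad_real_cong: "(\<And>n. n < N \<Longrightarrow> y n = y' n) \<Longrightarrow> rad_real N y = rad_real N y'"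
  unfolding rad_real_def by (intro arg_cong[where f=sqrt] arg_cong2[where f="(/)"] sum.cong refl arg_cong[where f="\<lambda>t. t\<^sup>2"] arg_cong[where f=abs]) simp

lemma unit_c0: "(\<lambda>k. if k = n then 1 else 0 :: real) \<in> c0"
  unfolding c0_def
  by (auto intro!: tendsto_eventually simp: eventually_sequentially intro!: exI[of _ "Suc n"])

lemma unit_norm:
  assumes "e \<in> signs N"
  shows "(c0_norm (\<lambda>k. \<Sum>n<N. e n * (if k = n then 1 else 0)))\<^sup>2 \<le> 1"
proof -
  define z where "z = (\<lambda>k. \<Sum>n<N. e n * (if k = n then 1 else (0::real)))"
  have zk: "\<bar>z k\<bar> \<le> 1" for k
  proof (cases "k < N")
    case True
    hence "z k = e k" by (simp add: z_def if_distrib[of "\<lambda>t. e _ * t"] cong: if_cong)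
    moreover have "e k * e k = 1" using signs_sq[OF True assms] .
    ultimately show ?thesis by (metis abs_le_square_iff abs_one one_power2 power2_eq_square order_refl)
  next
    case False
    hence "z k = 0" by (auto simp: z_def intro!: sum.neutral)
    thus ?thesis by simp
  qed
  have bdd: "bdd_above (range (\<lambda>k. \<bar>z k\<bar>))" using zk by (intro bdd_aboveI[where M=1]) auto
  have up: "(SUP k. \<bar>z k\<bar>) \<le> 1" by (rule cSUP_least) (use zk in auto)
  have lo: "\<bar>z 0\<bar> \<le> (SUP k. \<bar>z k\<bar>)" by (rule cSUP_upper[OF _ bdd]) auto
  have "\<bar>SUP k. \<bar>z k\<bar>\<bar> \<le> \<bar>1\<bar>" using up lo by linarith
  hence "(SUP k. \<bar>z k\<bar>)\<^sup>2 \<le> 1\<^sup>2" by (simp only: abs_le_square_iff)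
  thus ?thesis by (simp add: z_def c0_norm_def)
qed

lemma unit_rad: "rad_c0 N (\<lambda>n k. if k = n then 1 else 0) \<le> 1"
proof -
  have "(\<Sum>e\<in>signs N. (c0_norm (\<lambda>k. \<Sum>n<N. e n * (if k = n then 1 else 0)))\<^sup>2) \<le> (\<Sum>e\<in>signs N. 1)"
    by (intro sum_mono unit_norm)
  also have "\<dots> = 2^N" by (simp add: card_signs)
  finally show ?thesis unfolding rad_c0_def by simp
qed

theorem mainTheorem5:
  fixes a :: "nat \<Rightarrow> real"
  shows "R_bound {(\<lambda>x. a n * x n) | n. True} = l2_norm_ext a"
proof (rule antisym)
  show "R_bound {(\<lambda>x. a n * x n) | n. True} \<le> l2_norm_ext a"
    unfolding R_bound_def
  proof (rule Inf_lower, safe)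
    fix N S and x :: "nat \<Rightarrow> nat \<Rightarrow> real"
    assume S: "\<forall>n<N. S n \<in> {(\<lambda>x. a n * x n) | n. True}" and x: "\<forall>n<N. x n \<in> c0"
    have "\<forall>n\<in>{..<N}. \<exists>j. S n = (\<lambda>x. a j * x j)" using S by auto
    then obtain m where m: "\<forall>n\<in>{..<N}. S n = (\<lambda>x. a (m n) * x (m n))"
      by (metis (no_types) bchoice)
    define A where "A = (\<Sum>k\<in>m`{..<N}. (a k)\<^sup>2)"
    have eq: "rad_real N (\<lambda>n. S n (x n)) = rad_real N (\<lambda>n. a (m n) * x n (m n))"
      by (rule rad_real_cong) (use m in auto)
    have "finite (m`{..<N})" by simp
    then obtain M where M: "m`{..<N} \<subseteq> {..<M}"
      by (meson finite_nat_bounded)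
    have "A \<le> (\<Sum>k<M. (a k)\<^sup>2)" unfolding A_def by (rule sum_mono2[OF _ M]) auto
    hence "ennreal (sqrt A) \<le> ennreal (sqrt (\<Sum>k<M. (a k)\<^sup>2))" by (simp add: ennreal_leI)
    also have "\<dots> \<le> l2_norm_ext a" unfolding l2_norm_ext_def by (rule SUP_upper) auto
    finally have Al: "ennreal (sqrt A) \<le> l2_norm_ext a" .
    have "ennreal (rad_real N (\<lambda>n. S n (x n))) \<le> ennreal (sqrt A * rad_c0 N x)"
      unfolding eq A_def by (intro ennreal_leI upper x)
    also have "\<dots> = ennreal (sqrt A) * ennreal (rad_c0 N x)"
      by (rule ennreal_mult) (auto simp: A_def rad_c0_def intro!: sum_nonneg divide_nonneg_nonneg)
    also have "\<dots> \<le> l2_norm_ext a * ennreal (rad_c0 N x)"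
      by (rule mult_right_mono[OF Al]) simp
    finally show "ennreal (rad_real N (\<lambda>n. S n (x n))) \<le> l2_norm_ext a * ennreal (rad_c0 N x)" .
  qed
next
  show "l2_norm_ext a \<le> R_bound {(\<lambda>x. a n * x n) | n. True}"
    unfolding R_bound_def l2_norm_ext_def
  proof (rule Inf_greatest, rule SUP_least, safe)
    fix C N
    assume H: "\<forall>N S x. (\<forall>n<N. S n \<in> {(\<lambda>x. a n * x n) | n. True}) \<longrightarrow> (\<forall>n<N. x n \<in> c0) \<longrightarrow>
      ennreal (rad_real N (\<lambda>n. S n (x n))) \<le> C * ennreal (rad_c0 N x)"
    define u :: "nat \<Rightarrow> nat \<Rightarrow> real" where "u = (\<lambda>n k. if k = n then 1 else (0::real))"
    have "ennreal (rad_real N (\<lambda>n. (\<lambda>x. a n * x n) (u n))) \<le> C * ennreal (rad_c0 N u)"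
      using H[rule_format, of N "\<lambda>n x. a n * x n" u] by (auto simp: u_def unit_c0)
    also have "\<dots> \<le> C * 1"
      by (rule mult_left_mono) (use unit_rad[of N] in \<open>auto simp: u_def\<close>)
    also have "rad_real N (\<lambda>n. (\<lambda>x. a n * x n) (u n)) = sqrt (\<Sum>n<N. (a n)\<^sup>2)"
      unfolding rad_real_def by (simp add: orth u_def)
    finally show "ennreal (sqrt (\<Sum>n<N. (a n)\<^sup>2)) \<le> C" by simp
  qed
qed

end
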